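(* Let $X,Y$ be real-valued random variables on an atomless probability space. Then: (i) if $\mathbb E[Y_+]=\infty$, then $X\le_{\rm cx}Y$ is equivalent to $X\le_{\rm dcx}Y$; (ii) if $\mathbb E[Y_-]=\infty$, then $X\le_{\rm cx}Y$ is equivalent to $X\le_{\rm icx}Y$; (iii) if $\mathbb E[Y_+]=\mathbb E[Y_-]=\infty$, then both $Y\le^\dagger_{\rm cx}X$ and $X\le_{\rm cx}Y$ hold.
   Context: $x_+=\max\{x,0\}$, $x_-=\max\{-x,0\}$. An expectation $\mathbb E[Z]$ is well-defined if $\mathbb E[Z_+]<\infty$ or $\mathbb E[Z_-]<\infty$. $\mathcal U_{\rm cx}$ (resp. $\mathcal U_{\rm icx}$, $\mathcal U_{\rm dcx}$) denotes the set of convex (resp. increasing convex, decreasing convex) functions $\mathbb R\to\mathbb R$. For $*\in\{\rm cx,icx,dcx\}$, $X\le_*Y$ means $\mathbb E[u(X)]\le\mathbb E[u(Y)]$ for all $u\in\mathcal U_*$ such that both expectations are well-defined. $X\le^\dagger_{\rm cx}Y$ means $\mathbb E[u(X)]\le\mathbb E[u(Y)]$ for all $u\in\mathcal U_{\rm cx}$ such that both expectations are finite. *)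

theory Defs
  imports "HOL-Probability.Probability"
begin

definition pos_exp :: "'a measure \<Rightarrow> ('a \<Rightarrow> real) \<Rightarrow> ennreal" where
  "pos_exp M Z = (\<integral>\<^sup>+ x. ennreal (max (Z x) 0) \<partial>M)"

definition neg_exp :: "'a measure \<Rightarrow> ('a \<Rightarrow> real) \<Rightarrow> ennreal" where
  "neg_exp M Z = (\<integral>\<^sup>+ x. ennreal (max (- Z x) 0) \<partial>M)"

definition exp_well_defined :: "'a measure \<Rightarrow> ('a \<Rightarrow> real) \<Rightarrow> bool" where
  "exp_well_defined M Z \<longleftrightarrow> pos_exp M Z < \<infinity> \<or> neg_exp M Z < \<infinity>"

definition exp_finite :: "'a measure \<Rightarrow> ('a \<Rightarrow> real) \<Rightarrow> bool" where
  "exp_finite M Z \<longleftrightarrow> pos_exp M Z < \<infinity> \<and> neg_exp M Z < \<infinity>"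

text \<open>The (extended-real) expectation E[Z] = E[Z_+] - E[Z_-]; meaningful when well-defined.\<close>
definition ext_exp :: "'a measure \<Rightarrow> ('a \<Rightarrow> real) \<Rightarrow> ereal" where
  "ext_exp M Z = enn2ereal (pos_exp M Z) - enn2ereal (neg_exp M Z)"

definition U_cx :: "(real \<Rightarrow> real) set" where
  "U_cx = {u. convex_on UNIV u}"

definition U_icx :: "(real \<Rightarrow> real) set" where
  "U_icx = {u. convex_on UNIV u \<and> mono u}"

definition U_dcx :: "(real \<Rightarrow> real) set" where
  "U_dcx = {u. convex_on UNIV u \<and> antimono u}"

definition stoch_le :: "'a measure \<Rightarrow> (real \<Rightarrow> real) set \<Rightarrow> ('a \<Rightarrow> real) \<Rightarrow> ('a \<Rightarrow> real) \<Rightarrow> bool" where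
  "stoch_le M U X Y \<longleftrightarrow> (\<forall>u\<in>U. exp_well_defined M (u \<circ> X) \<and> exp_well_defined M (u \<circ> Y)
      \<longrightarrow> ext_exp M (u \<circ> X) \<le> ext_exp M (u \<circ> Y))"

definition cx_le_dagger :: "'a measure \<Rightarrow> ('a \<Rightarrow> real) \<Rightarrow> ('a \<Rightarrow> real) \<Rightarrow> bool" where
  "cx_le_dagger M X Y \<longleftrightarrow> (\<forall>u\<in>U_cx. exp_finite M (u \<circ> X) \<and> exp_finite M (u \<circ> Y)
      \<longrightarrow> ext_exp M (u \<circ> X) \<le> ext_exp M (u \<circ> Y))"

definition atomless :: "'a measure \<Rightarrow> bool" where
  "atomless M \<longleftrightarrow> (\<forall>A\<in>sets M. 0 < measure M A \<longrightarrow>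
      (\<exists>B\<in>sets M. B \<subseteq> A \<and> 0 < measure M B \<and> measure M B < measure M A))"

end

theory Submission
  imports Defs
begin

lemma convex_lin_lower:
  fixes u :: "real \<Rightarrow> real"
  assumes cv: "convex_on UNIV u" and na: "\<not> antimono u"
  obtains a c where "a > 0" "c \<ge> 0" "\<And>y. a * max y 0 \<le> max (u y) 0 + c"
proof -
  from na obtain s t where st: "s \<le> t" "u s < u t" unfolding antimono_def by force
  then have "s < t" by (cases "s = t") auto
  define a where "a = (u t - u s) / (t - s)"
  have a0: "a > 0" using st \<open>s < t\<close> by (simp add: a_def)
  have ge: "u y \<ge> u s + a * (y - s)" if "y \<ge> t" for y
  proof (cases "y = t")
    case True then show ?thesis using \<open>s < t\<close> by (simp add: a_def field_simps)
  next
    case False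
    then have "t < y" using that by simp
    from convex_on_slope_le(1)[OF cv _ _ \<open>s < t\<close> this]
    have "(u s - u t) / (s - t) \<le> (u s - u y) / (s - y)" by simp
    moreover have "(u s - u t) / (s - t) = a" unfolding a_def by (metis minus_diff_eq minus_divide_divide)
    moreover have "(u s - u y) / (s - y) = (u y - u s) / (y - s)" by (metis minus_diff_eq minus_divide_divide)
    ultimately have "a \<le> (u y - u s) / (y - s)" by simp
    then have "a * (y - s) \<le> u y - u s" using \<open>s < t\<close> \<open>t < y\<close> by (simp add: pos_le_divide_eq)
    then show ?thesis by simp
  qed
  define c where "c = \<bar>u s - a * s\<bar> + a * \<bar>t\<bar>"
  have c0: "c \<ge> 0" using a0 by (simp add: c_def)
  have "a * max y 0 \<le> max (u y) 0 + c" for y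
  proof (cases "y \<ge> t")
    case True
    have "u s + a * (y - s) \<le> u y" using ge[OF True] .
    have "0 \<le> a * \<bar>t\<bar>" using a0 by simp
    show ?thesis
    proof (cases "y \<ge> 0")
      case True
      then have "a * max y 0 = a * y" by simp
      moreover have "a * y \<le> u y + \<bar>u s - a * s\<bar>" using ge[OF \<open>y \<ge> t\<close>]
        by (simp add: algebra_simps)
      ultimately show ?thesis using \<open>0 \<le> a * \<bar>t\<bar>\<close> max.cobounded1[of "u y" 0]
        unfolding c_def by linarith
    next
      case False
      then show ?thesis using \<open>0 \<le> a * \<bar>t\<bar>\<close> by (simp add: c_def)
    qed
  next
    case False
    then have "a * max y 0 \<le> a * \<bar>t\<bar>" using a0 by (intro mult_left_mono) auto
    then show ?thesis unfolding c_def by (smt (verit) abs_ge_zero)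
  qed
  then show ?thesis using that a0 c0 by blast
qed


lemma convex_comp_meas:
  fixes u :: "real \<Rightarrow> real"
  assumes "convex_on UNIV u" "Z \<in> borel_measurable M"
  shows "u \<circ> Z \<in> borel_measurable M"
proof -
  have "continuous_on UNIV u" by (rule convex_on_continuous[OF open_UNIV assms(1)])
  then have "u \<in> borel_measurable borel" by (rule borel_measurable_continuous_onI)
  then show ?thesis using assms(2) by (simp add: measurable_comp comp_def)
qed

lemma pos_exp_inf:
  fixes u :: "real \<Rightarrow> real"
  assumes P: "prob_space M" and Z: "Z \<in> borel_measurable M" and inf: "pos_exp M Z = \<infinity>"
    and cv: "convex_on UNIV u" and na: "\<not> antimono u"
  shows "pos_exp M (u \<circ> Z) = \<infinity>"
proof -
  interpret prob_space M by (rule P)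
  obtain a c where a: "a > 0" "c \<ge> 0" "\<And>y. a * max y 0 \<le> max (u y) 0 + c"
    using convex_lin_lower[OF cv na] by blast
  have m: "u \<circ> Z \<in> borel_measurable M" by (rule convex_comp_meas[OF cv Z])
  have "(\<integral>\<^sup>+ x. ennreal (a * max (Z x) 0) \<partial>M) \<le> (\<integral>\<^sup>+ x. ennreal (max (u (Z x)) 0) + ennreal c \<partial>M)"
  proof (rule nn_integral_mono)
    fix x
    have "ennreal (a * max (Z x) 0) \<le> ennreal (max (u (Z x)) 0 + c)"
      using a(3) by (rule ennreal_leI)
    also have "\<dots> = ennreal (max (u (Z x)) 0) + ennreal c"
      by (rule ennreal_plus) (use a(2) in auto)
    finally show "ennreal (a * max (Z x) 0) \<le> ennreal (max (u (Z x)) 0) + ennreal c" .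
  qed
  also have "\<dots> = pos_exp M (u \<circ> Z) + ennreal c"
    using m by (subst nn_integral_add) (auto simp: pos_exp_def emeasure_space_1 comp_def)
  finally have le: "(\<integral>\<^sup>+ x. ennreal (a * max (Z x) 0) \<partial>M) \<le> pos_exp M (u \<circ> Z) + ennreal c" .
  have "(\<integral>\<^sup>+ x. ennreal (a * max (Z x) 0) \<partial>M) = ennreal a * pos_exp M Z"
    using a(1) Z unfolding pos_exp_def
    by (subst nn_integral_cmult[symmetric]) (auto simp: ennreal_mult)
  also have "\<dots> = \<infinity>" using inf a(1) by (simp add: ennreal_mult_top)
  finally have "pos_exp M (u \<circ> Z) + ennreal c = \<infinity>" using le by (simp add: top_unique)
  then show ?thesis by simp
qed

lemma ext_exp_inf:
  assumes "pos_exp M Z = \<infinity>" "exp_well_defined M Z"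
  shows "ext_exp M Z = \<infinity>"
proof -
  have "neg_exp M Z < \<infinity>" using assms unfolding exp_well_defined_def by simp
  then obtain r where "neg_exp M Z = ennreal r" "r \<ge> 0" by (cases "neg_exp M Z") auto
  then show ?thesis using assms(1) unfolding ext_exp_def by simp
qed

lemma ext_exp_const:
  assumes "prob_space M"
  shows "ext_exp M (\<lambda>x. k) = ereal k"
proof -
  interpret prob_space M by (rule assms)
  show ?thesis unfolding ext_exp_def pos_exp_def neg_exp_def
    by (cases "k \<ge> 0") (auto simp: emeasure_space_1 max_def zero_ennreal.rep_eq)
qed


lemma convex_reflect:
  fixes u :: "real \<Rightarrow> real"
  assumes "convex_on UNIV u"
  shows "convex_on UNIV (\<lambda>y. u (- y))"
proof (rule convex_onI)
  fix t x y :: real assume t: "0 < t" "t < 1"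
  have "u ((1 - t) *\<^sub>R (- x) + t *\<^sub>R (- y)) \<le> (1 - t) * u (- x) + t * u (- y)"
    using t by (intro convex_onD[OF assms]) auto
  moreover have "(1 - t) *\<^sub>R (- x) + t *\<^sub>R (- y) = - ((1 - t) *\<^sub>R x + t *\<^sub>R y)" by simp
  ultimately show "u (- ((1 - t) *\<^sub>R x + t *\<^sub>R y)) \<le> (1 - t) * u (- x) + t * u (- y)" by simp
qed simp

lemma neg_exp_inf:
  fixes u :: "real \<Rightarrow> real"
  assumes P: "prob_space M" and Z: "Z \<in> borel_measurable M" and inf: "neg_exp M Z = \<infinity>"
    and cv: "convex_on UNIV u" and nm: "\<not> mono u"
  shows "pos_exp M (u \<circ> Z) = \<infinity>"
proof -
  have Z': "(\<lambda>x. - Z x) \<in> borel_measurable M" using Z by simp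
  have i: "pos_exp M (\<lambda>x. - Z x) = \<infinity>" using inf by (simp add: pos_exp_def neg_exp_def)
  have na: "\<not> antimono (\<lambda>y. u (- y))"
  proof
    assume "antimono (\<lambda>y. u (- y))"
    then have "mono u" unfolding mono_def antimono_def
    proof (intro allI impI)
      fix x y :: real assume a: "\<forall>x y. x \<le> y \<longrightarrow> u (- y) \<le> u (- x)" and "x \<le> y"
      then have "u (- (- x)) \<le> u (- (- y))" using a[rule_format, of "- y" "- x"] by simp
      then show "u x \<le> u y" by simp
    qed
    with nm show False by simp
  qed
  have "pos_exp M ((\<lambda>y. u (- y)) \<circ> (\<lambda>x. - Z x)) = \<infinity>"
    by (rule pos_exp_inf[OF P Z' i convex_reflect[OF cv] na])
  then show ?thesis by (simp add: comp_def)
qed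

lemma mono_antimono_const:
  fixes u :: "real \<Rightarrow> real"
  assumes "mono u" "antimono u"
  shows "u = (\<lambda>_. u 0)"
proof
  fix y show "u y = u 0"
  proof (cases "y \<le> 0")
    case True
    then show ?thesis using monoD[OF assms(1) True] antimonoD[OF assms(2) True] by simp
  next
    case False
    then have y0: "0 \<le> y" by simp
    show ?thesis using monoD[OF assms(1) y0] antimonoD[OF assms(2) y0] by simp
  qed
qed

theorem lemma1:
  fixes M :: "'a measure" and X Y :: "'a \<Rightarrow> real"
  assumes "prob_space M" and "atomless M"
    and "X \<in> borel_measurable M" and "Y \<in> borel_measurable M"
  shows "(pos_exp M Y = \<infinity> \<longrightarrow> (stoch_le M U_cx X Y \<longleftrightarrow> stoch_le M U_dcx X Y))
       \<and> (neg_exp M Y = \<infinity> \<longrightarrow> (stoch_le M U_cx X Y \<longleftrightarrow> stoch_le M U_icx X Y))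
       \<and> (pos_exp M Y = \<infinity> \<and> neg_exp M Y = \<infinity> \<longrightarrow> cx_le_dagger M Y X \<and> stoch_le M U_cx X Y)"
proof (intro conjI impI)
  note P = assms(1) and Ym = assms(4)
  have constcase: "ext_exp M (u \<circ> X) = ext_exp M (u \<circ> Y)" if "mono u" "antimono u" for u :: "real \<Rightarrow> real"
  proof -
    have "u = (\<lambda>_. u 0)" by (rule mono_antimono_const[OF that])
    then have "u \<circ> X = (\<lambda>_. u 0)" "u \<circ> Y = (\<lambda>_. u 0)" by (metis comp_def)+
    then show ?thesis by simp
  qed
  {
    assume pY: "pos_exp M Y = \<infinity>"
    show "stoch_le M U_cx X Y \<longleftrightarrow> stoch_le M U_dcx X Y"
    proof
      assume "stoch_le M U_cx X Y" then show "stoch_le M U_dcx X Y"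
        unfolding stoch_le_def U_cx_def U_dcx_def by blast
    next
      assume h: "stoch_le M U_dcx X Y"
      show "stoch_le M U_cx X Y" unfolding stoch_le_def
      proof (intro ballI impI)
        fix u assume u: "u \<in> U_cx" and wd: "exp_well_defined M (u \<circ> X) \<and> exp_well_defined M (u \<circ> Y)"
        show "ext_exp M (u \<circ> X) \<le> ext_exp M (u \<circ> Y)"
        proof (cases "antimono u")
          case True
          then have "u \<in> U_dcx" using u by (simp add: U_cx_def U_dcx_def)
          then show ?thesis using h wd unfolding stoch_le_def by blast
        next
          case False
          have "pos_exp M (u \<circ> Y) = \<infinity>" using pos_exp_inf[OF P Ym pY _ False] u by (simp add: U_cx_def)
          then have "ext_exp M (u \<circ> Y) = \<infinity>" using ext_exp_inf wd by blast
          then show ?thesis by simp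
        qed
      qed
    qed
  }
  {
    assume nY: "neg_exp M Y = \<infinity>"
    show "stoch_le M U_cx X Y \<longleftrightarrow> stoch_le M U_icx X Y"
    proof
      assume "stoch_le M U_cx X Y" then show "stoch_le M U_icx X Y"
        unfolding stoch_le_def U_cx_def U_icx_def by blast
    next
      assume h: "stoch_le M U_icx X Y"
      show "stoch_le M U_cx X Y" unfolding stoch_le_def
      proof (intro ballI impI)
        fix u assume u: "u \<in> U_cx" and wd: "exp_well_defined M (u \<circ> X) \<and> exp_well_defined M (u \<circ> Y)"
        show "ext_exp M (u \<circ> X) \<le> ext_exp M (u \<circ> Y)"
        proof (cases "mono u")
          case True
          then have "u \<in> U_icx" using u by (simp add: U_cx_def U_icx_def)
          then show ?thesis using h wd unfolding stoch_le_def by blast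
        next
          case False
          have "pos_exp M (u \<circ> Y) = \<infinity>" using neg_exp_inf[OF P Ym nY _ False] u by (simp add: U_cx_def)
          then have "ext_exp M (u \<circ> Y) = \<infinity>" using ext_exp_inf wd by blast
          then show ?thesis by simp
        qed
      qed
    qed
  }
  {
    assume both: "pos_exp M Y = \<infinity> \<and> neg_exp M Y = \<infinity>"
    have key: "pos_exp M (u \<circ> Y) = \<infinity>" if "u \<in> U_cx" "\<not> (mono u \<and> antimono u)" for u
    proof (cases "mono u")
      case True
      then have na: "\<not> antimono u" using that by simp
      show ?thesis using pos_exp_inf[OF P Ym _ _ na] both that(1) by (simp add: U_cx_def)
    next
      case False
      then show ?thesis using neg_exp_inf[OF P Ym _ _ False] both that(1) by (simp add: U_cx_def)
    qed
    show "cx_le_dagger M Y X" unfolding cx_le_dagger_def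
    proof (intro ballI impI)
      fix u assume u: "u \<in> U_cx" and fin: "exp_finite M (u \<circ> Y) \<and> exp_finite M (u \<circ> X)"
      show "ext_exp M (u \<circ> Y) \<le> ext_exp M (u \<circ> X)"
      proof (cases "mono u \<and> antimono u")
        case True then show ?thesis using constcase by simp
      next
        case False
        then show ?thesis using key[OF u False] fin by (simp add: exp_finite_def)
      qed
    qed
    show "stoch_le M U_cx X Y" unfolding stoch_le_def
    proof (intro ballI impI)
      fix u assume u: "u \<in> U_cx" and wd: "exp_well_defined M (u \<circ> X) \<and> exp_well_defined M (u \<circ> Y)"
      show "ext_exp M (u \<circ> X) \<le> ext_exp M (u \<circ> Y)"
      proof (cases "mono u \<and> antimono u")
        case True then show ?thesis using constcase by simp
      next
        case False
        then have "ext_exp M (u \<circ> Y) = \<infinity>" using key[OF u False] ext_exp_inf wd by blast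
        then show ?thesis by simp
      qed
    qed
  }
qed

end
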